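(* Let $\theta\sim G$ with bounded support and let $Y$, taking countably many values, have conditional probability mass function $f_\theta$ given $\theta$; let $Y_1,\dots,Y_n$ be i.i.d. with mass function $p_y=P_G(Y=y)=\int f_\theta(y)\,dG(\theta)$. For a sequence $\varepsilon_n\to0$ let $S_n=S_n(\varepsilon_n)=\{y: p_y\ge \varepsilon_n/n\}$, and assume: (i) $P_G(Y\in S_n)=1-o(1/n)$; (ii) for $\varepsilon_n\to0$ sufficiently slowly, $|S_n|=O(\log n)$. Let $n_y=\#\{i:Y_i=y\}$ and $\hat p_y=n_y/n$. Then for every $\alpha>0$, $$\sum_y n_y\log\frac{\hat p_y}{p_y}=o_p\big((\log n)^{1+\alpha}\big).$$
   Context: $\hat F_n$ denotes the empirical distribution of $Y_1,\dots,Y_n$ (the nonparametric MLE); the left-hand side is the log-likelihood ratio $\sum_i\log\big(P_{\hat F_n}(Y_i)/P_G(Y_i)\big)$. Conditions (i)–(ii) are the paper's assumption on $G$ (stated in terms of "an $o(1)$ function"), which the paper notes holds in its binomial and Poisson sampling scenarios e.g. when the support of $G$ is bounded. *)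

theory Defs
  imports "HOL-Probability.Probability" "HOL-Library.Landau_Symbols"
begin

definition iid_sample :: "'y pmf \<Rightarrow> nat \<Rightarrow> (nat \<Rightarrow> 'y) pmf" where
  "iid_sample P n = Pi_pmf {..<n} undefined (\<lambda>_. P)"

definition count_obs :: "nat \<Rightarrow> (nat \<Rightarrow> 'y) \<Rightarrow> 'y \<Rightarrow> nat" where
  "count_obs n \<omega> y = card {i \<in> {..<n}. \<omega> i = y}"

text \<open>Log-likelihood ratio sum_y n_y log(phat_y / p_y), phat_y = n_y/n; terms with n_y = 0
  vanish, so the sum is over the observed values.\<close>
definition loglik_ratio :: "'y pmf \<Rightarrow> nat \<Rightarrow> (nat \<Rightarrow> 'y) \<Rightarrow> real" where
  "loglik_ratio P n \<omega> =
     (\<Sum>y \<in> \<omega> ` {..<n}. real (count_obs n \<omega> y) *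
        ln ((real (count_obs n \<omega> y) / real n) / pmf P y))"

end

theory Submission
  imports Defs "HOL-Real_Asymp.Real_Asymp"
begin

lemma pmf_prob_compl': "measure_pmf.prob P (- A) = 1 - measure_pmf.prob P A"
  using measure_pmf.prob_compl[of A P] by (simp add: Compl_eq_Diff_UNIV)

lemma binom_exp_Suc:
  fixes g :: "nat \<Rightarrow> real"
  assumes p: "p \<in> {0..1}"
  shows "measure_pmf.expectation (binomial_pmf (Suc n) p) g =
     p * measure_pmf.expectation (binomial_pmf n p) (\<lambda>k. g (k+1)) + (1-p) * measure_pmf.expectation (binomial_pmf n p) g"
proof -
  have "binomial_pmf (Suc n) p = bernoulli_pmf p \<bind> (\<lambda>b. map_pmf (\<lambda>k. (if b then 1 else 0) + k) (binomial_pmf n p))"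
    using p by (simp add: binomial_pmf_Suc map_pmf_def)
  also have "measure_pmf.expectation \<dots> g = (\<Sum>b\<in>UNIV. pmf (bernoulli_pmf p) b *\<^sub>R measure_pmf.expectation (map_pmf (\<lambda>k. (if b then 1 else 0) + k) (binomial_pmf n p)) g)"
    using p by (intro pmf_expectation_bind) (auto intro!: finite_imageI)
  finally show ?thesis using p by (simp add: UNIV_bool add.commute)
qed

lemma binom_mean: "p \<in> {0..1} \<Longrightarrow> measure_pmf.expectation (binomial_pmf n p) real = real n * p"
proof (induction n)
  case 0 thus ?case by (simp add: binomial_pmf_0)
next
  case (Suc n)
  have "measure_pmf.expectation (binomial_pmf n p) (\<lambda>k. real (k+1)) = measure_pmf.expectation (binomial_pmf n p) real + 1"
    using Suc.prems by (simp add: Bochner_Integration.integral_add)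
  then show ?case using Suc by (simp add: binom_exp_Suc algebra_simps)
qed

lemma binom_sq: "p \<in> {0..1} \<Longrightarrow> measure_pmf.expectation (binomial_pmf n p) (\<lambda>k. (real k)^2) = real n * p * (1-p) + (real n * p)^2"
proof (induction n)
  case 0 thus ?case by (simp add: binomial_pmf_0)
next
  case (Suc n)
  have "measure_pmf.expectation (binomial_pmf n p) (\<lambda>k. (real (k+1))^2) = 
     measure_pmf.expectation (binomial_pmf n p) (\<lambda>k. (real k)^2) + 2 * measure_pmf.expectation (binomial_pmf n p) real + 1"
    using Suc.prems by (simp add: power2_eq_square algebra_simps Bochner_Integration.integral_add)
  then show ?case using Suc binom_mean[OF Suc.prems, of n] by (simp add: binom_exp_Suc algebra_simps power2_eq_square)
qed

lemma binom_var: "p \<in> {0..1} \<Longrightarrow> measure_pmf.expectation (binomial_pmf n p) (\<lambda>k. (real k - real n * p)^2) = real n * p * (1-p)"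
proof -
  assume p: "p \<in> {0..1}"
  have "(\<lambda>k. (real k - real n * p)^2) = (\<lambda>k. (real k)^2 + (- 2 * real n * p) * real k + (real n * p)^2)"
    by (auto simp: power2_eq_square algebra_simps)
  then show ?thesis using p binom_mean[OF p, of n] binom_sq[OF p, of n]
    by (simp add: Bochner_Integration.integral_add power2_eq_square algebra_simps)
qed

lemma count_dist: "map_pmf (\<lambda>\<omega>. count_obs n \<omega> y) (iid_sample P n) = binomial_pmf n (pmf P y)"
proof -
  have b: "map_pmf (\<lambda>z. z = y) P = bernoulli_pmf (pmf P y)"
  proof (rule pmf_eqI)
    fix i :: bool
    show "pmf (map_pmf (\<lambda>z. z = y) P) i = pmf (bernoulli_pmf (pmf P y)) i"
    proof (cases i)
      case True
      then show ?thesis by (simp add: pmf_map vimage_def measure_pmf_single pmf_le_1)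
    next
      case False
      have "{x. (x = y) = i} = - {y}" using False by auto
      then show ?thesis using False
        by (simp add: pmf_map vimage_def pmf_prob_compl' measure_pmf_single pmf_le_1)
    qed
  qed
  have "binomial_pmf n (pmf P y) = map_pmf (\<lambda>f. card {x\<in>{..<n}. f x}) (Pi_pmf {..<n} (undefined = y) (\<lambda>_. bernoulli_pmf (pmf P y)))"
    by (rule binomial_pmf_altdef') (auto simp: pmf_le_1)
  also have "Pi_pmf {..<n} (undefined = y) (\<lambda>_. bernoulli_pmf (pmf P y)) = map_pmf (\<lambda>h. (\<lambda>z. z = y) \<circ> h) (Pi_pmf {..<n} undefined (\<lambda>_. P))"
    unfolding b[symmetric] by (rule Pi_pmf_map) auto
  finally show ?thesis by (simp add: pmf.map_comp o_def iid_sample_def count_obs_def)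
qed

lemma finite_pmf_ge:
  assumes c: "c > 0"
  shows "finite {y. pmf P y \<ge> c}"
proof (rule ccontr)
  assume inf: "infinite {y. pmf P y \<ge> c}"
  obtain k :: nat where k: "real k * c > 1" using reals_Archimedean3[OF c] by blast
  obtain F where F: "F \<subseteq> {y. pmf P y \<ge> c}" "finite F" "card F = k"
    using infinite_arbitrarily_large[OF inf] by blast
  have "real k * c = (\<Sum>y\<in>F. c)" using F by simp
  also have "\<dots> \<le> (\<Sum>y\<in>F. pmf P y)" using F by (intro sum_mono) auto
  also have "\<dots> = measure_pmf.prob P F" using F by (simp add: measure_measure_pmf_finite)
  also have "\<dots> \<le> 1" by simp
  finally show False using k by simp
qed

lemma sum_counts:
  "(\<Sum>y\<in>\<omega> ` {..<n}. real (count_obs n \<omega> y)) = real n"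
proof -
  have "card {..<n} = (\<Sum>y\<in>\<omega> ` {..<n}. card {i\<in>{..<n}. \<omega> i = y})"
  proof (subst card_UN_disjoint[symmetric])
    have "(\<Union>y\<in>\<omega> ` {..<n}. {i\<in>{..<n}. \<omega> i = y}) = {..<n}" by auto
    then show "card {..<n} = card (\<Union>y\<in>\<omega> ` {..<n}. {i\<in>{..<n}. \<omega> i = y})" by simp
  qed auto
  then show ?thesis unfolding count_obs_def by (simp flip: of_nat_sum)
qed

lemma term_upper:
  fixes c n p :: real
  assumes "c > 0" "n > 0" "p > 0"
  shows "c * ln ((c / n) / p) \<le> (c - n * p)^2 / (n * p) + c - n * p"
proof -
  have "ln ((c / n) / p) \<le> (c / n) / p - 1" using assms by (intro ln_le_minus_one) simp
  then have "c * ln ((c / n) / p) \<le> c * ((c / n) / p - 1)" using assms by (intro mult_left_mono) auto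
  also have "\<dots> = (c - n * p)^2 / (n * p) + c - n * p" using assms
    by (simp add: field_simps power2_eq_square)
  finally show ?thesis .
qed

lemma term_lower:
  fixes c n p :: real
  assumes "c > 0" "n > 0" "p > 0"
  shows "c - n * p \<le> c * ln ((c / n) / p)"
proof -
  have "ln ((n * p) / c) \<le> (n * p) / c - 1" using assms by (intro ln_le_minus_one) simp
  moreover have "ln ((n * p) / c) = - ln ((c / n) / p)" using assms
    by (simp add: ln_div)
  ultimately have "1 - (n * p) / c \<le> ln ((c / n) / p)" by simp
  then have "c * (1 - (n * p) / c) \<le> c * ln ((c / n) / p)" using assms by (intro mult_left_mono) auto
  moreover have "c * (1 - (n * p) / c) = c - n * p" using assms by (simp add: right_diff_distrib)
  ultimately show ?thesis by simp
qed

lemma count_pos: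
  assumes "y \<in> \<omega> ` {..<n}"
  shows "count_obs n \<omega> y > 0"
  using assms unfolding count_obs_def by (auto simp: card_gt_0_iff)

lemma count_pos': "x < n \<Longrightarrow> count_obs n \<omega> (\<omega> x) > 0"
  by (rule count_pos) auto

lemma count_zero:
  assumes "y \<notin> \<omega> ` {..<n}"
  shows "count_obs n \<omega> y = 0"
  using assms unfolding count_obs_def by auto

lemma det_lower:
  assumes n: "n > 0" and pos: "\<forall>i<n. pmf P (\<omega> i) > 0"
  shows "0 \<le> loglik_ratio P n \<omega>"
proof -
  let ?O = "\<omega> ` {..<n}"
  have "(\<Sum>y\<in>?O. real (count_obs n \<omega> y) - real n * pmf P y) \<le> loglik_ratio P n \<omega>"
    unfolding loglik_ratio_def
    using n pos count_pos' by (intro sum_mono term_lower) auto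
  moreover have "(\<Sum>y\<in>?O. real (count_obs n \<omega> y) - real n * pmf P y) = real n * (1 - measure_pmf.prob P ?O)"
    by (simp add: sum_subtractf sum_counts measure_measure_pmf_finite sum_distrib_left algebra_simps)
  moreover have "measure_pmf.prob P ?O \<le> 1" by simp
  ultimately show ?thesis using n by (smt (verit) mult_nonneg_nonneg of_nat_0_le_iff)
qed

lemma det_upper:
  assumes n: "n > 0" and S: "finite S" and pos: "\<forall>y\<in>S. pmf P y > 0" and inS: "\<forall>i<n. \<omega> i \<in> S"
  shows "loglik_ratio P n \<omega> \<le> (\<Sum>y\<in>S. (real (count_obs n \<omega> y) - real n * pmf P y)^2 / (real n * pmf P y))
            + real n * (1 - measure_pmf.prob P S)"
proof -
  let ?O = "\<omega> ` {..<n}"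
  let ?t = "\<lambda>y. (real (count_obs n \<omega> y) - real n * pmf P y)^2 / (real n * pmf P y) + real (count_obs n \<omega> y) - real n * pmf P y"
  have OS: "?O \<subseteq> S" using inS by auto
  have "loglik_ratio P n \<omega> \<le> (\<Sum>y\<in>?O. ?t y)"
    unfolding loglik_ratio_def
    using n pos count_pos' OS by (intro sum_mono term_upper) auto
  also have "\<dots> = (\<Sum>y\<in>S. ?t y)"
  proof (rule sum.mono_neutral_left[OF S OS])
    show "\<forall>y\<in>S - ?O. ?t y = 0" using pos n by (auto simp: count_zero power2_eq_square)
  qed
  also have "\<dots> = (\<Sum>y\<in>S. (real (count_obs n \<omega> y) - real n * pmf P y)^2 / (real n * pmf P y))
       + (\<Sum>y\<in>S. real (count_obs n \<omega> y)) - real n * (\<Sum>y\<in>S. pmf P y)"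
    by (simp add: sum.distrib sum_subtractf sum_distrib_left)
  also have "(\<Sum>y\<in>S. real (count_obs n \<omega> y)) = (\<Sum>y\<in>?O. real (count_obs n \<omega> y))"
    by (rule sum.mono_neutral_right[OF S OS]) (auto simp: count_zero)
  also have "(\<Sum>y\<in>S. pmf P y) = measure_pmf.prob P S" using S by (simp add: measure_measure_pmf_finite)
  finally show ?thesis by (simp add: sum_counts algebra_simps)
qed

lemma count_integrable:
  "integrable (measure_pmf (iid_sample P n)) (\<lambda>\<omega>. g (count_obs n \<omega> y) :: real)"
proof -
  have "integrable (measure_pmf (binomial_pmf n (pmf P y))) g"
    by (rule integrable_binomial_pmf) (auto simp: pmf_le_1)
  then show ?thesis by (simp flip: count_dist add: integrable_map_pmf_eq)
qed

lemma count_var: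
  "measure_pmf.expectation (iid_sample P n) (\<lambda>\<omega>. (real (count_obs n \<omega> y) - real n * pmf P y)^2)
     = real n * pmf P y * (1 - pmf P y)"
proof -
  have "measure_pmf.expectation (iid_sample P n) (\<lambda>\<omega>. (real (count_obs n \<omega> y) - real n * pmf P y)^2)
     = measure_pmf.expectation (map_pmf (\<lambda>\<omega>. count_obs n \<omega> y) (iid_sample P n)) (\<lambda>k. (real k - real n * pmf P y)^2)"
    by simp
  also have "\<dots> = real n * pmf P y * (1 - pmf P y)"
    unfolding count_dist by (rule binom_var) (auto simp: pmf_le_1)
  finally show ?thesis .
qed

lemma chi_exp:
  assumes S: "finite S" and n: "n > 0" and pos: "\<forall>y\<in>S. pmf P y > 0"
  shows "measure_pmf.expectation (iid_sample P n)
     (\<lambda>\<omega>. \<Sum>y\<in>S. (real (count_obs n \<omega> y) - real n * pmf P y)^2 / (real n * pmf P y)) \<le> real (card S)"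
proof -
  have "measure_pmf.expectation (iid_sample P n)
     (\<lambda>\<omega>. \<Sum>y\<in>S. (real (count_obs n \<omega> y) - real n * pmf P y)^2 / (real n * pmf P y))
     = (\<Sum>y\<in>S. measure_pmf.expectation (iid_sample P n) (\<lambda>\<omega>. (real (count_obs n \<omega> y) - real n * pmf P y)^2 / (real n * pmf P y)))"
    by (rule Bochner_Integration.integral_sum) (rule count_integrable)
  also have "\<dots> = (\<Sum>y\<in>S. 1 - pmf P y)"
  proof (rule sum.cong[OF refl])
    fix y assume y: "y \<in> S"
    have "measure_pmf.expectation (iid_sample P n) (\<lambda>\<omega>. (real (count_obs n \<omega> y) - real n * pmf P y)^2 / (real n * pmf P y))
       = measure_pmf.expectation (iid_sample P n) (\<lambda>\<omega>. (real (count_obs n \<omega> y) - real n * pmf P y)^2) / (real n * pmf P y)"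
      by simp
    also have "\<dots> = 1 - pmf P y" using y pos n by (simp add: count_var less_imp_neq[symmetric])
    finally show "measure_pmf.expectation (iid_sample P n) (\<lambda>\<omega>. (real (count_obs n \<omega> y) - real n * pmf P y)^2 / (real n * pmf P y)) = 1 - pmf P y" .
  qed
  also have "\<dots> \<le> (\<Sum>y\<in>S. 1)" by (intro sum_mono) simp
  finally show ?thesis by simp
qed

lemma union_bound:
  "measure_pmf.prob (iid_sample P n) {\<omega>. \<exists>i<n. \<omega> i \<notin> S} \<le> real n * measure_pmf.prob P (- S)"
proof -
  have "{\<omega>. \<exists>i<n. \<omega> i \<notin> S} = (\<Union>i\<in>{..<n}. {\<omega>. \<omega> i \<notin> S})" by auto
  then have "measure_pmf.prob (iid_sample P n) {\<omega>. \<exists>i<n. \<omega> i \<notin> S} \<le> (\<Sum>i\<in>{..<n}. measure_pmf.prob (iid_sample P n) {\<omega>. \<omega> i \<notin> S})"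
    by (simp add: measure_pmf.finite_measure_subadditive_finite)
  also have "\<dots> = (\<Sum>i\<in>{..<n}. measure_pmf.prob P (- S))"
  proof (rule sum.cong[OF refl])
    fix i assume i: "i \<in> {..<n}"
    have "measure_pmf.prob (iid_sample P n) {\<omega>. \<omega> i \<notin> S} = measure_pmf.prob (map_pmf (\<lambda>f. f i) (iid_sample P n)) (- S)"
      by (simp add: measure_map_pmf vimage_def)
    also have "map_pmf (\<lambda>f. f i) (iid_sample P n) = P"
      using i unfolding iid_sample_def by (subst Pi_pmf_component) auto
    finally show "measure_pmf.prob (iid_sample P n) {\<omega>. \<omega> i \<notin> S} = measure_pmf.prob P (- S)" .
  qed
  finally show ?thesis by simp
qed

lemma prob_bound:
  fixes c t :: real
  assumes n: "n > 0" and c: "c > 0" and S_def: "S = {y. pmf P y \<ge> c}"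
    and t: "t > real n * measure_pmf.prob P (- S)"
  shows "measure_pmf.prob (iid_sample P n) {\<omega>. \<bar>loglik_ratio P n \<omega>\<bar> > t}
     \<le> real n * measure_pmf.prob P (- S) + real (card S) / (t - real n * measure_pmf.prob P (- S))"
proof -
  define a where "a = real n * measure_pmf.prob P (- S)"
  define X where "X = (\<lambda>\<omega>. \<Sum>y\<in>S. (real (count_obs n \<omega> y) - real n * pmf P y)^2 / (real n * pmf P y))"
  have S: "finite S" unfolding S_def using c by (rule finite_pmf_ge)
  have pos: "\<forall>y\<in>S. pmf P y > 0" using c S_def by auto
  have ta: "t - a > 0" using t a_def by simp
  have sub: "{\<omega>. \<bar>loglik_ratio P n \<omega>\<bar> > t} \<subseteq> {\<omega>. \<exists>i<n. \<omega> i \<notin> S} \<union> {\<omega>. X \<omega> \<ge> t - a}"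
  proof
    fix \<omega> assume \<omega>: "\<omega> \<in> {\<omega>. \<bar>loglik_ratio P n \<omega>\<bar> > t}"
    show "\<omega> \<in> {\<omega>. \<exists>i<n. \<omega> i \<notin> S} \<union> {\<omega>. X \<omega> \<ge> t - a}"
    proof (cases "\<forall>i<n. \<omega> i \<in> S")
      case True
      have l: "0 \<le> loglik_ratio P n \<omega>" using True pos n by (intro det_lower) auto
      have u: "loglik_ratio P n \<omega> \<le> X \<omega> + real n * (1 - measure_pmf.prob P S)"
        unfolding X_def using True pos n S by (intro det_upper) auto
      have "a = real n * (1 - measure_pmf.prob P S)" unfolding a_def by (simp add: pmf_prob_compl')
      then show ?thesis using l u \<omega> by auto
    qed auto
  qed
  have "measure_pmf.prob (iid_sample P n) {\<omega>. \<bar>loglik_ratio P n \<omega>\<bar> > t}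
      \<le> measure_pmf.prob (iid_sample P n) ({\<omega>. \<exists>i<n. \<omega> i \<notin> S} \<union> {\<omega>. X \<omega> \<ge> t - a})"
    using sub by (intro measure_pmf.finite_measure_mono) auto
  also have "\<dots> \<le> measure_pmf.prob (iid_sample P n) {\<omega>. \<exists>i<n. \<omega> i \<notin> S} + measure_pmf.prob (iid_sample P n) {\<omega>. X \<omega> \<ge> t - a}"
    by (rule measure_Un_le) auto
  also have "measure_pmf.prob (iid_sample P n) {\<omega>. \<exists>i<n. \<omega> i \<notin> S} \<le> a"
    unfolding a_def by (rule union_bound)
  also have "measure_pmf.prob (iid_sample P n) {\<omega>. X \<omega> \<ge> t - a} \<le> measure_pmf.expectation (iid_sample P n) X / (t - a)"
  proof -
    have "measure_pmf.prob (iid_sample P n) {\<omega> \<in> space (measure_pmf (iid_sample P n)). X \<omega> \<ge> t - a} \<le> measure_pmf.expectation (iid_sample P n) X / (t - a)"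
    proof (rule integral_Markov_inequality_measure[where A = UNIV])
      show "integrable (measure_pmf (iid_sample P n)) X" unfolding X_def
        by (intro Bochner_Integration.integrable_sum count_integrable)
      show "AE x in measure_pmf (iid_sample P n). 0 \<le> X x" unfolding X_def
        using pos by (intro AE_I2 sum_nonneg) auto
    qed (use ta in auto)
    then show ?thesis by simp
  qed
  also have "measure_pmf.expectation (iid_sample P n) X / (t - a) \<le> real (card S) / (t - a)"
    unfolding X_def using ta by (intro divide_right_mono chi_exp S n pos) auto
  finally show ?thesis unfolding a_def by simp
qed

theorem proposition1:
  fixes G :: "real measure" and f :: "real \<Rightarrow> ('y::countable) pmf" and P :: "'y pmf"
    and \<epsilon> :: "nat \<Rightarrow> real" and \<alpha> :: real
  assumes G_prob: "prob_space G"
    and G_sets: "sets G = sets borel"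
    and G_bounded: "\<exists>B. AE \<theta> in G. \<bar>\<theta>\<bar> \<le> B"
    and f_meas: "\<And>y. (\<lambda>\<theta>. pmf (f \<theta>) y) \<in> borel_measurable G"
    and P_mix: "\<And>y. pmf P y = (\<integral>\<theta>. pmf (f \<theta>) y \<partial>G)"
    and eps_pos: "\<And>n. \<epsilon> n > 0"
    and eps_lim: "\<epsilon> \<longlonglongrightarrow> 0"
    and cond_i: "(\<lambda>n. real n * measure_pmf.prob P (- {y. pmf P y \<ge> \<epsilon> n / real n}))
                   \<longlonglongrightarrow> 0"
    and cond_ii: "(\<lambda>n. real (card {y. pmf P y \<ge> \<epsilon> n / real n})) \<in> O(\<lambda>n. ln (real n))"
    and alpha_pos: "\<alpha> > 0"
  shows "\<forall>\<delta>>0. (\<lambda>n. measure_pmf.prob (iid_sample P n)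
            {\<omega>. \<bar>loglik_ratio P n \<omega>\<bar> > \<delta> * ln (real n) powr (1 + \<alpha>)}) \<longlonglongrightarrow> 0"
proof (intro allI impI)
  fix \<delta> :: real assume d: "\<delta> > 0"
  define S where "S = (\<lambda>n. {y. pmf P y \<ge> \<epsilon> n / real n})"
  define a where "a = (\<lambda>n. real n * measure_pmf.prob P (- S n))"
  define t where "t = (\<lambda>n. \<delta> * ln (real n) powr (1 + \<alpha>))"
  have a_lim: "a \<longlonglongrightarrow> 0" using cond_i unfolding a_def S_def .
  obtain C where C: "C > 0" "eventually (\<lambda>n. norm (real (card (S n))) \<le> C * norm (ln (real n))) sequentially"
    using cond_ii unfolding S_def by (elim landau_o.bigE)
  have ev1: "eventually (\<lambda>n. a n < 1) sequentially"
    using a_lim by (rule order_tendstoD) simp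
  have "filterlim t at_top sequentially" unfolding t_def using d alpha_pos by real_asymp
  then have ev2: "eventually (\<lambda>n. t n \<ge> 2) sequentially" by (simp add: filterlim_at_top)
  have ev3: "eventually (\<lambda>n. n \<ge> 1) sequentially" by (rule eventually_ge_at_top)
  have bound: "eventually (\<lambda>n. measure_pmf.prob (iid_sample P n) {\<omega>. \<bar>loglik_ratio P n \<omega>\<bar> > t n}
      \<le> a n + 2 * C * (ln (real n) / t n)) sequentially"
    using ev1 ev2 ev3 C(2)
  proof eventually_elim
    case (elim n)
    have n: "n > 0" using elim by simp
    have lnn: "ln (real n) \<ge> 0" using elim by simp
    have b: "real (card (S n)) \<le> C * ln (real n)" using elim lnn by simp
    have ta: "t n - a n \<ge> t n / 2" using elim by simp
    have tpos: "t n / 2 > 0" using elim by simp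
    have "measure_pmf.prob (iid_sample P n) {\<omega>. \<bar>loglik_ratio P n \<omega>\<bar> > t n}
        \<le> a n + real (card (S n)) / (t n - a n)"
      unfolding a_def
    proof (rule prob_bound[OF n _ S_def[THEN fun_cong, of n]])
      show "0 < \<epsilon> n / real n" using n eps_pos[of n] by simp
      show "real n * measure_pmf.prob P (- S n) < t n"
        using elim unfolding a_def by simp
    qed
    also have "real (card (S n)) / (t n - a n) \<le> C * ln (real n) / (t n / 2)"
      using b ta tpos C(1) lnn by (intro frac_le) auto
    also have "C * ln (real n) / (t n / 2) = 2 * C * (ln (real n) / t n)" by simp
    finally show ?case by simp
  qed
  have "(\<lambda>n. ln (real n) / t n) \<longlonglongrightarrow> 0" unfolding t_def using d alpha_pos by real_asymp
  then have lim: "(\<lambda>n. a n + 2 * C * (ln (real n) / t n)) \<longlonglongrightarrow> 0 + 2 * C * 0"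
    by (intro tendsto_intros a_lim)
  have "(\<lambda>n. measure_pmf.prob (iid_sample P n)
            {\<omega>. \<bar>loglik_ratio P n \<omega>\<bar> > t n}) \<longlonglongrightarrow> 0"
  proof (rule tendsto_sandwich[OF _ bound])
    show "eventually (\<lambda>n. 0 \<le> measure_pmf.prob (iid_sample P n) {\<omega>. \<bar>loglik_ratio P n \<omega>\<bar> > t n}) sequentially"
      by simp
    show "(\<lambda>n. a n + 2 * C * (ln (real n) / t n)) \<longlonglongrightarrow> 0" using lim by simp
  qed simp
  then show "(\<lambda>n. measure_pmf.prob (iid_sample P n)
            {\<omega>. \<bar>loglik_ratio P n \<omega>\<bar> > \<delta> * ln (real n) powr (1 + \<alpha>)}) \<longlonglongrightarrow> 0"
    by (simp add: t_def)
qed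

end
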